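(* Let $R\in\mathcal R_{\rm s}^{n_y}$. Let $A$ be the nominal closed-loop matrix (the matrix $A_R$ with $R=I$), let $P=P^{\top}>0$ satisfy $AP+PA^{\top}+BB^{\top}=0$, let $P_R$ satisfy $A_RP_R+P_RA_R^{\top}+BB^{\top}=0$, and set $\Delta P_R=P_R-P$, $E_R=(I-R)C_{\rm m,o}$, $C_{\rm r}=[0,\ C_{\rm m,o}]$. Assume that $\|\Delta P_R\|_2\le\delta_R\|P\|_2$ for some $\delta_R\in[0,1)$ and that $\delta_R\,\kappa(P)<1$. Then $$\frac{\operatorname{tr}\{C_{\rm p}P_RC_{\rm p}^{\top}\}}{\operatorname{tr}\{C_{{\rm r},R}P_RC_{{\rm r},R}^{\top}\}}\le \frac{\kappa(P)(1+\delta_R)}{1-\delta_R\kappa(P)}\cdot\frac{\|C_{\rm p}\|_F^2}{\|E_R\|_F^2+\|C_{\rm r}\|_F^2}.$$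
   Context: Data: $A_{\rm p}\in\mathbb R^{n_x\times n_x}$, $B_{\rm p}\in\mathbb R^{n_x\times n_u}$, $B_w,B_{\hat w}\in\mathbb R^{n_x\times n_x}$, $C_{\rm m,o}\in\mathbb R^{n_y\times n_x}$, $C_{\rm p,o}\in\mathbb R^{n_{y_{\rm p}}\times n_x}$, $D_{\rm p,o}\in\mathbb R^{n_{y_{\rm p}}\times n_u}$, $K\in\mathbb R^{n_x\times n_y}$, $L\in\mathbb R^{n_u\times n_x}$, with $(A_{\rm p},B_{\rm p})$ controllable and $(A_{\rm p},C_{\rm m,o})$ observable. For $R\in\mathbb R^{n_y\times n_y}$: $$A_R=\begin{bmatrix}A_{\rm p}+B_{\rm p}L & -B_{\rm p}L\\ K(I-R)C_{\rm m,o} & A_{\rm p}-KC_{\rm m,o}\end{bmatrix},\quad B=\begin{bmatrix}B_w&0\\ B_w&-B_{\hat w}\end{bmatrix},$$ $C_{{\rm r},R}=[(R-I)C_{\rm m,o},\ C_{\rm m,o}]$, $C_{\rm p}=[C_{\rm p,o}+D_{\rm p,o}L,\ -D_{\rm p,o}L]$. So $A=A_I=\begin{bmatrix}A_{\rm p}+B_{\rm p}L & -B_{\rm p}L\\ 0 & A_{\rm p}-KC_{\rm m,o}\end{bmatrix}$. $\mathcal R_{\rm s}^{n_y}=\{R: A_R\text{ is Hurwitz}\}$. $\|\cdot\|_2$ is the spectral norm, $\|\cdot\|_F$ the Frobenius norm, and for symmetric positive definite $P$, $\kappa(P)=\lambda_{\max}(P)/\lambda_{\min}(P)$. *)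

theory Defs
  imports "HOL-Analysis.Analysis"
begin

(* 2x2 block matrix [[M11, M12],[M21, M22]]; the block index type is 'a + 'b *)
definition blk :: "real^'b^'a \<Rightarrow> real^'d^'a \<Rightarrow> real^'b^'c \<Rightarrow> real^'d^'c \<Rightarrow> real^('b + 'd)^('a + 'c)" where
  "blk M11 M12 M21 M22 = (\<chi> i j. case i of
      Inl a \<Rightarrow> (case j of Inl b \<Rightarrow> M11 $ a $ b | Inr d \<Rightarrow> M12 $ a $ d)
    | Inr c \<Rightarrow> (case j of Inl b \<Rightarrow> M21 $ c $ b | Inr d \<Rightarrow> M22 $ c $ d))"

(* 1x2 block row [M1, M2] *)
definition brow :: "real^'b^'a \<Rightarrow> real^'d^'a \<Rightarrow> real^('b + 'd)^'a" where
  "brow M1 M2 = (\<chi> i j. case j of Inl b \<Rightarrow> M1 $ i $ b | Inr d \<Rightarrow> M2 $ i $ d)"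

(* complexification of a real square matrix *)
definition cmat :: "real^'n^'n \<Rightarrow> complex^'n^'n" where
  "cmat M = (\<chi> i j. complex_of_real (M $ i $ j))"

(* Hurwitz: every (complex) eigenvalue, i.e. root of det(sI - M), has negative real part *)
definition hurwitz :: "real^'n^'n \<Rightarrow> bool" where
  "hurwitz M \<longleftrightarrow> (\<forall>s::complex. det (mat s - cmat M) = 0 \<longrightarrow> Re s < 0)"

(* Kalman controllability: [B, AB, ..., A^(n-1)B] has full row rank *)
definition controllable :: "real^'n^'n \<Rightarrow> real^'m^'n \<Rightarrow> bool" where
  "controllable M N \<longleftrightarrow>
     (\<forall>v::real^'n. (\<forall>k<CARD('n). \<forall>u. v \<bullet> ((((**) M) ^^ k) N *v u) = 0) \<longrightarrow> v = 0)"

(* Kalman observability: [C; CA; ...; CA^(n-1)] has full column rank *)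
definition observable :: "real^'n^'n \<Rightarrow> real^'n^'m \<Rightarrow> bool" where
  "observable M C \<longleftrightarrow>
     (\<forall>x::real^'n. (\<forall>k<CARD('n). (C ** ((((**) M) ^^ k) (mat 1))) *v x = 0) \<longrightarrow> x = 0)"

definition sym_pos_def :: "real^'n^'n \<Rightarrow> bool" where
  "sym_pos_def P \<longleftrightarrow> transpose P = P \<and> (\<forall>x. x \<noteq> 0 \<longrightarrow> x \<bullet> (P *v x) > 0)"

(* real eigenvalues of a real square matrix *)
definition real_eigenvalues :: "real^'n^'n \<Rightarrow> real set" where
  "real_eigenvalues M = {l. \<exists>v. v \<noteq> 0 \<and> M *v v = l *\<^sub>R v}"

definition lambda_max :: "real^'n^'n \<Rightarrow> real" where
  "lambda_max M = Max (real_eigenvalues M)"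

definition lambda_min :: "real^'n^'n \<Rightarrow> real" where
  "lambda_min M = Min (real_eigenvalues M)"

definition cond_num :: "real^'n^'n \<Rightarrow> real" where
  "cond_num M = lambda_max M / lambda_min M"

(* spectral norm (induced 2-norm) *)
definition spec_norm :: "real^'n^'m \<Rightarrow> real" where
  "spec_norm M = onorm (\<lambda>x. M *v x)"

(* Frobenius norm *)
definition frob_norm :: "real^'n^'m \<Rightarrow> real" where
  "frob_norm M = sqrt (\<Sum>i\<in>UNIV. \<Sum>j\<in>UNIV. (M $ i $ j)\<^sup>2)"

(* closed-loop matrix A_R *)
definition A_cl :: "real^'x^'x \<Rightarrow> real^'u^'x \<Rightarrow> real^'y^'x \<Rightarrow> real^'x^'u \<Rightarrow> real^'x^'y
    \<Rightarrow> real^'y^'y \<Rightarrow> real^('x + 'x)^('x + 'x)" where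
  "A_cl Ap Bp K L Cmo R =
     blk (Ap + Bp ** L) (- (Bp ** L)) (K ** (mat 1 - R) ** Cmo) (Ap - K ** Cmo)"

end

theory Submission
  imports Defs
begin


lemma sym_inner:
  fixes P :: "real^'n^'n"
  assumes "transpose P = P"
  shows "x \<bullet> (P *v y) = y \<bullet> (P *v x)"
proof -
  have "x \<bullet> (P *v y) = (x v* P) \<bullet> y" by (simp add: dot_lmul_matrix)
  also have "x v* P = P *v x" by (metis assms transpose_matrix_vector)
  finally show ?thesis by (simp add: inner_commute)
qed

lemma quad_expand:
  fixes Q :: "real^'n^'n"
  assumes "transpose Q = Q"
  shows "(x + t *\<^sub>R y) \<bullet> (Q *v (x + t *\<^sub>R y)) =
         x \<bullet> (Q *v x) + 2 * t * (y \<bullet> (Q *v x)) + t\<^sup>2 * (y \<bullet> (Q *v y))"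
proof -
  have "(x + t *\<^sub>R y) \<bullet> (Q *v (x + t *\<^sub>R y)) =
      x \<bullet> (Q *v x) + t * (x \<bullet> (Q *v y)) + t * (y \<bullet> (Q *v x)) + t * t * (y \<bullet> (Q *v y))"
    by (simp add: matrix_vector_right_distrib matrix_vector_mult_scaleR inner_add_left inner_add_right algebra_simps)
  then show ?thesis using sym_inner[OF assms, of x y] by (simp add: power2_eq_square)
qed

lemma psd_cs:
  fixes Q :: "real^'n^'n"
  assumes "transpose Q = Q" and psd: "\<And>z. z \<bullet> (Q *v z) \<ge> 0"
  shows "(y \<bullet> (Q *v x))\<^sup>2 \<le> (x \<bullet> (Q *v x)) * (y \<bullet> (Q *v y))"
proof -
  define a where "a = x \<bullet> (Q *v x)"
  define b where "b = y \<bullet> (Q *v x)"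
  define c where "c = y \<bullet> (Q *v y)"
  have q: "0 \<le> a + 2 * t * b + t\<^sup>2 * c" for t
    using psd[of "x + t *\<^sub>R y"] quad_expand[OF assms(1), of x t y] by (simp add: a_def b_def c_def)
  have a0: "a \<ge> 0" using psd[of x] by (simp add: a_def)
  have c0: "c \<ge> 0" using psd[of y] by (simp add: c_def)
  show ?thesis
  proof (cases "c = 0")
    case True
    show ?thesis
    proof (cases "b = 0")
      case False
      have "0 \<le> a + 2 * (-(a+1)/(2*b)) * b" using q[of "-(a+1)/(2*b)"] True by simp
      also have "\<dots> = -1" using False by (simp add: field_simps)
      finally show ?thesis by simp
    qed (simp add: b_def True c_def[symmetric])
  next
    case False
    then have cp: "c > 0" using c0 by simp
    have "0 \<le> a + 2 * (-b/c) * b + (-b/c)\<^sup>2 * c" using q by blast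
    also have "\<dots> = a - b\<^sup>2 / c" using cp by (simp add: field_simps power2_eq_square)
    finally have "b\<^sup>2 / c \<le> a" by simp
    then have "b\<^sup>2 \<le> a * c" using cp by (simp add: field_simps)
    then show ?thesis by (simp add: a_def b_def c_def)
  qed
qed

lemma psd_zero:
  fixes Q :: "real^'n^'n"
  assumes "transpose Q = Q" and psd: "\<And>z. z \<bullet> (Q *v z) \<ge> 0" and "x \<bullet> (Q *v x) = 0"
  shows "Q *v x = 0"
proof -
  have h: "((Q *v x) \<bullet> (Q *v x))\<^sup>2 \<le> (x \<bullet> (Q *v x)) * ((Q *v x) \<bullet> (Q *v (Q *v x)))"
    using psd_cs[OF assms(1,2), where x=x and y="Q *v x"] by simp
  have "((Q *v x) \<bullet> (Q *v x))\<^sup>2 \<le> 0" using h unfolding assms(3) by simp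
  then have "(Q *v x) \<bullet> (Q *v x) = 0" by (metis power2_eq_square mult_eq_0_iff le_less not_square_less_zero)
  then show ?thesis by simp
qed

lemma rayleigh_max:
  fixes P :: "real^'n^'n"
  assumes sym: "transpose P = P"
  shows "\<exists>M v. v \<noteq> 0 \<and> P *v v = M *\<^sub>R v \<and> (\<forall>x. x \<bullet> (P *v x) \<le> M * (norm x)\<^sup>2)"
proof -
  have cont: "continuous_on (sphere 0 1) (\<lambda>x::real^'n. x \<bullet> (P *v x))"
    by (intro continuous_intros linear_continuous_on bounded_linear_intros matrix_vector_mul_bounded_linear)
  have ne: "sphere (0::real^'n) 1 \<noteq> {}" by simp
  obtain v where v: "v \<in> sphere 0 1" and vmax: "\<And>y. y \<in> sphere 0 1 \<Longrightarrow> y \<bullet> (P *v y) \<le> v \<bullet> (P *v v)"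
    using continuous_attains_sup[OF compact_sphere ne cont] by blast
  define M where "M = v \<bullet> (P *v v)"
  have nv: "norm v = 1" using v by simp
  have bound: "x \<bullet> (P *v x) \<le> M * (norm x)\<^sup>2" for x
  proof (cases "x = 0")
    case False
    define u where "u = (1 / norm x) *\<^sub>R x"
    have "u \<in> sphere 0 1" using False by (simp add: u_def)
    then have "u \<bullet> (P *v u) \<le> M" using vmax M_def by simp
    moreover have "u \<bullet> (P *v u) = (x \<bullet> (P *v x)) / (norm x)\<^sup>2"
      by (simp add: u_def matrix_vector_mult_scaleR power2_eq_square)
    ultimately show ?thesis using False by (simp add: divide_le_eq mult.commute)
  qed simp
  define Q where "Q = M *\<^sub>R mat 1 - P"
  have Qx: "Q *v x = M *\<^sub>R x - P *v x" for x
    by (simp add: Q_def matrix_vector_mult_diff_rdistrib scaleR_matrix_vector_assoc[symmetric])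
  have symQ: "transpose Q = Q" proof -
    have "transpose (M *\<^sub>R mat 1 - P) = transpose (M *\<^sub>R mat 1) - transpose P"
      by (simp add: transpose_def vec_eq_iff)
    then show ?thesis using sym by (simp add: Q_def transpose_scalar transpose_mat)
  qed
  have psd: "z \<bullet> (Q *v z) \<ge> 0" for z
    using bound[of z] by (simp add: Qx inner_diff_right power2_norm_eq_inner)
  have "v \<bullet> (Q *v v) = 0" using nv by (simp add: Qx inner_diff_right M_def power2_norm_eq_inner[symmetric])
  then have "Q *v v = 0" using psd_zero[OF symQ psd] by blast
  then have "P *v v = M *\<^sub>R v" by (simp add: Qx)
  moreover have "v \<noteq> 0" using nv by auto
  ultimately show ?thesis using bound by blast
qed

lemma eig_inner:
  fixes P :: "real^'n^'n"
  assumes "P *v v = l *\<^sub>R v"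
  shows "v \<bullet> (P *v v) = l * (norm v)\<^sup>2"
  using assms by (simp add: power2_norm_eq_inner)

lemma eig_finite:
  fixes P :: "real^'n^'n"
  assumes sym: "transpose P = P"
  shows "finite (real_eigenvalues P)"
proof -
  define g where "g l = (SOME v. v \<noteq> 0 \<and> P *v v = l *\<^sub>R v)" for l
  have g: "g l \<noteq> 0 \<and> P *v g l = l *\<^sub>R g l" if "l \<in> real_eigenvalues P" for l
    using that unfolding g_def real_eigenvalues_def mem_Collect_eq by (rule someI_ex)
  have inj: "inj_on g (real_eigenvalues P)"
  proof (rule inj_onI)
    fix a b assume a: "a \<in> real_eigenvalues P" and b: "b \<in> real_eigenvalues P" and e: "g a = g b"
    have "a *\<^sub>R g a = b *\<^sub>R g a" using g[OF a] g[OF b] e by metis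
    then have "(a - b) *\<^sub>R g a = 0" by (simp add: scaleR_diff_left)
    then show "a = b" using g[OF a] by simp
  qed
  have orth: "pairwise orthogonal (g ` real_eigenvalues P)"
  unfolding pairwise_def
  proof (intro ballI impI)
    fix u w assume "u \<in> g ` real_eigenvalues P" "w \<in> g ` real_eigenvalues P" "u \<noteq> w"
    then obtain a b where a: "a \<in> real_eigenvalues P" and b: "b \<in> real_eigenvalues P" and uw: "u = g a" "w = g b"
      and ne: "g a \<noteq> g b" by blast
    show "orthogonal u w" unfolding uw
    proof -
    have "a \<noteq> b" using ne by auto
    have "g a \<bullet> (P *v g b) = g b \<bullet> (P *v g a)" by (rule sym_inner[OF sym])
    then have "g a \<bullet> (b *\<^sub>R g b) = g b \<bullet> (a *\<^sub>R g a)" by (simp only: conjunct2[OF g[OF a]] conjunct2[OF g[OF b]])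
    then have "b * (g a \<bullet> g b) = a * (g a \<bullet> g b)" by (simp add: inner_commute)
    then have "g a \<bullet> g b = 0" using \<open>a \<noteq> b\<close> by simp
    then show "orthogonal (g a) (g b)" by (simp add: orthogonal_def)
  qed
  qed
  have "0 \<notin> g ` real_eigenvalues P"
  proof
    assume "0 \<in> g ` real_eigenvalues P"
    then obtain l where "l \<in> real_eigenvalues P" "g l = 0" by (metis imageE)
    then show False using g by blast
  qed
  then have "finite (g ` real_eigenvalues P)"
    by (rule independent_imp_finite[OF pairwise_orthogonal_independent[OF orth]])
  then show ?thesis by (rule finite_imageD[OF _ inj])
qed

lemma lmax_props:
  fixes P :: "real^'n^'n"
  assumes sym: "transpose P = P"
  shows "(\<forall>x. x \<bullet> (P *v x) \<le> lambda_max P * (norm x)\<^sup>2) \<and> (\<exists>v. v \<noteq> 0 \<and> P *v v = lambda_max P *\<^sub>R v)"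
proof -
  obtain M v where v: "v \<noteq> 0" "P *v v = M *\<^sub>R v" and b: "\<And>x. x \<bullet> (P *v x) \<le> M * (norm x)\<^sup>2"
    using rayleigh_max[OF sym] by blast
  have "lambda_max P = M" unfolding lambda_max_def
  proof (rule Max_eqI[OF eig_finite[OF sym]])
    show "M \<in> real_eigenvalues P" using v unfolding real_eigenvalues_def by blast
    fix l assume "l \<in> real_eigenvalues P"
    then obtain w where w: "w \<noteq> 0" "P *v w = l *\<^sub>R w" unfolding real_eigenvalues_def by blast
    have "l * (norm w)\<^sup>2 \<le> M * (norm w)\<^sup>2" using b[of w] eig_inner[OF w(2)] by simp
    then show "l \<le> M" using w(1) by simp
  qed
  then show ?thesis using v b by auto
qed

lemma lmin_props:
  fixes P :: "real^'n^'n"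
  assumes sym: "transpose P = P"
  shows "(\<forall>x. lambda_min P * (norm x)\<^sup>2 \<le> x \<bullet> (P *v x)) \<and> (\<exists>v. v \<noteq> 0 \<and> P *v v = lambda_min P *\<^sub>R v)"
proof -
  have sym': "transpose (- P) = - P" using sym by (simp add: transpose_def vec_eq_iff)
  obtain M v where v: "v \<noteq> 0" "(- P) *v v = M *\<^sub>R v" and b: "\<And>x. x \<bullet> ((- P) *v x) \<le> M * (norm x)\<^sup>2"
    using rayleigh_max[OF sym'] by blast
  have neg: "(- P) *v x = - (P *v x)" for x by (simp add: matrix_vector_mult_def vec_eq_iff sum_negf)
  have v2: "P *v v = (- M) *\<^sub>R v" using v(2) neg[of v] by (metis minus_minus scaleR_minus_left)
  have b2: "(- M) * (norm x)\<^sup>2 \<le> x \<bullet> (P *v x)" for x using b[of x] neg[of x] by simp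
  have "lambda_min P = - M" unfolding lambda_min_def
  proof (rule Min_eqI[OF eig_finite[OF sym]])
    show "- M \<in> real_eigenvalues P" using v(1) v2 unfolding real_eigenvalues_def by blast
    fix l assume "l \<in> real_eigenvalues P"
    then obtain w where w: "w \<noteq> 0" "P *v w = l *\<^sub>R w" unfolding real_eigenvalues_def by blast
    have h: "(- M) * (norm w)\<^sup>2 \<le> l * (norm w)\<^sup>2" using b2[of w] eig_inner[OF w(2)] by simp
    show "- M \<le> l" using mult_right_le_imp_le[OF h] w(1) by simp
  qed
  then show ?thesis using v(1) v2 b2 by auto
qed

lemma spd_lmin_pos:
  fixes P :: "real^'n^'n"
  assumes "sym_pos_def P"
  shows "lambda_min P > 0"
proof -
  have sym: "transpose P = P" and pd: "\<And>x. x \<noteq> 0 \<Longrightarrow> x \<bullet> (P *v x) > 0" using assms by (auto simp: sym_pos_def_def)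
  obtain v where v: "v \<noteq> 0" "P *v v = lambda_min P *\<^sub>R v" using lmin_props[OF sym] by blast
  have "0 < lambda_min P * (norm v)\<^sup>2" using pd[OF v(1)] eig_inner[OF v(2)] by simp
  then show ?thesis using v(1) by (simp add: zero_less_mult_iff)
qed

lemma spd_spec_norm:
  fixes P :: "real^'n^'n"
  assumes "sym_pos_def P"
  shows "spec_norm P \<le> lambda_max P"
proof -
  have sym: "transpose P = P" and pd: "\<And>x. x \<noteq> 0 \<Longrightarrow> x \<bullet> (P *v x) > 0" using assms by (auto simp: sym_pos_def_def)
  have psd: "z \<bullet> (P *v z) \<ge> 0" for z using pd[of z] by (cases "z = 0") auto
  have ub: "\<And>x. x \<bullet> (P *v x) \<le> lambda_max P * (norm x)\<^sup>2" using lmax_props[OF sym] by blast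
  obtain v where v: "v \<noteq> 0" "P *v v = lambda_max P *\<^sub>R v" using lmax_props[OF sym] by blast
  have "0 < lambda_max P * (norm v)\<^sup>2" using pd[OF v(1)] eig_inner[OF v(2)] by simp
  then have M0: "lambda_max P \<ge> 0" using v(1) by (simp add: zero_less_mult_iff)
  show ?thesis unfolding spec_norm_def
  proof (rule onorm_le)
    fix x :: "real^'n"
    define y where "y = P *v x"
    have "(y \<bullet> y)\<^sup>2 \<le> (x \<bullet> (P *v x)) * (y \<bullet> (P *v y))"
      using psd_cs[OF sym psd, where x=x and y=y] unfolding y_def[symmetric] .
    also have "\<dots> \<le> (lambda_max P * (norm x)\<^sup>2) * (lambda_max P * (norm y)\<^sup>2)"
      by (rule mult_mono[OF ub[of x] ub[of y] order_trans[OF psd[of x] ub[of x]] psd[of y]])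
    finally have h: "(y \<bullet> y)\<^sup>2 \<le> (lambda_max P * (norm x)\<^sup>2) * (lambda_max P * (norm y)\<^sup>2)" .
    have yy: "y \<bullet> y = (norm y)\<^sup>2" by (simp add: power2_norm_eq_inner)
    have "(norm y)\<^sup>2 * (norm y)\<^sup>2 \<le> (lambda_max P * norm x)\<^sup>2 * (norm y)\<^sup>2"
      using h unfolding yy by (simp add: power2_eq_square mult_ac)
    then have "(norm y)\<^sup>2 \<le> (lambda_max P * norm x)\<^sup>2"
    proof (cases "norm y = 0")
      case False
      then have "(norm y)\<^sup>2 > 0" by simp
      then show ?thesis using \<open>(norm y)\<^sup>2 * (norm y)\<^sup>2 \<le> _\<close> by (rule mult_right_le_imp_le[rotated])
    qed simp
    then have "norm y \<le> lambda_max P * norm x"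
      using M0 by (simp add: power2_le_iff_abs_le)
    then show "norm (P *v x) \<le> lambda_max P * norm x" by (simp add: y_def)
  qed
qed


lemma trace_rows:
  fixes C :: "real^'n^'m" and M :: "real^'n^'n"
  shows "trace (C ** M ** transpose C) = (\<Sum>i\<in>UNIV. (C $ i) \<bullet> (M *v (C $ i)))"
  unfolding trace_def
proof (rule sum.cong[OF refl])
  fix i
  have "(C ** M ** transpose C) $ i $ i = (\<Sum>k\<in>UNIV. (\<Sum>j\<in>UNIV. C $ i $ j * M $ j $ k) * C $ i $ k)"
    by (simp add: matrix_matrix_mult_def transpose_def)
  also have "\<dots> = (\<Sum>k\<in>UNIV. \<Sum>j\<in>UNIV. C $ i $ j * M $ j $ k * C $ i $ k)"
    by (simp add: sum_distrib_right)
  also have "\<dots> = (\<Sum>j\<in>UNIV. \<Sum>k\<in>UNIV. C $ i $ j * M $ j $ k * C $ i $ k)"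
    by (rule sum.swap)
  also have "\<dots> = (\<Sum>j\<in>UNIV. C $ i $ j * (\<Sum>k\<in>UNIV. M $ j $ k * C $ i $ k))"
    by (simp add: sum_distrib_left mult.assoc)
  also have "\<dots> = (C $ i) \<bullet> (M *v (C $ i))"
    by (simp add: matrix_vector_mult_def inner_vec_def)
  finally show "(C ** M ** transpose C) $ i $ i = (C $ i) \<bullet> (M *v (C $ i))" .
qed

lemma frob_rows:
  fixes C :: "real^'n^'m"
  shows "(frob_norm C)\<^sup>2 = (\<Sum>i\<in>UNIV. (norm (C $ i))\<^sup>2)"
  unfolding frob_norm_def power2_norm_eq_inner
  by (simp add: sum_nonneg inner_vec_def power2_eq_square)

lemma frob_brow:
  fixes A :: "real^'b^'a" and B :: "real^'d^'a"
  shows "(frob_norm (brow A B))\<^sup>2 = (frob_norm A)\<^sup>2 + (frob_norm B)\<^sup>2"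
proof -
  have "(\<Sum>j\<in>(UNIV::('b+'d) set). (brow A B $ i $ j)\<^sup>2) = (\<Sum>j\<in>UNIV. (A $ i $ j)\<^sup>2) + (\<Sum>j\<in>UNIV. (B $ i $ j)\<^sup>2)" for i
    apply (subst UNIV_Plus_UNIV[symmetric])
    apply (subst sum.Plus)
    by (simp_all add: brow_def o_def)
  then show ?thesis unfolding frob_norm_def
    by (simp add: sum_nonneg sum.distrib add_nonneg_nonneg)
qed

lemma frob_neg: "frob_norm (- A) = frob_norm (A :: real^'n^'m)"
  unfolding frob_norm_def by simp

lemma frob_zero: "frob_norm (0 :: real^'n^'m) = 0"
  unfolding frob_norm_def by simp

lemma neg_prod: "(R - mat 1) ** C = - ((mat 1 - R) ** (C :: real^'n^'m))" for R :: "real^'m^'m"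
  by (simp add: matrix_matrix_mult_def vec_eq_iff sum_negf[symmetric] algebra_simps)

theorem theorem1:
  fixes Ap :: "real^'x^'x" and Bp :: "real^'u^'x" and Bw Bwh :: "real^'x^'x"
    and Cmo :: "real^'x^'y" and Cpo :: "real^'x^'p" and Dpo :: "real^'u^'p"
    and K :: "real^'y^'x" and L :: "real^'x^'u" and R :: "real^'y^'y"
    and P PR :: "real^('x + 'x)^('x + 'x)" and \<delta>R :: real
  defines "A \<equiv> A_cl Ap Bp K L Cmo (mat 1)"
    and "A_R \<equiv> A_cl Ap Bp K L Cmo R"
    and "B \<equiv> blk Bw 0 Bw (- Bwh)"
    and "CrR \<equiv> brow ((R - mat 1) ** Cmo) Cmo"
    and "Cp \<equiv> brow (Cpo + Dpo ** L) (- (Dpo ** L))"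
    and "Cr \<equiv> brow (0 :: real^'x^'y) Cmo"
    and "ER \<equiv> (mat 1 - R) ** Cmo"
    and "\<Delta>PR \<equiv> PR - P"
  assumes "controllable Ap Bp"
    and "observable Ap Cmo"
    and "hurwitz A_R"
    and "sym_pos_def P"
    and "A ** P + P ** transpose A + B ** transpose B = 0"
    and "A_R ** PR + PR ** transpose A_R + B ** transpose B = 0"
    and "0 \<le> \<delta>R" and "\<delta>R < 1"
    and "spec_norm \<Delta>PR \<le> \<delta>R * spec_norm P"
    and "\<delta>R * cond_num P < 1"
  shows "trace (Cp ** PR ** transpose Cp) / trace (CrR ** PR ** transpose CrR)
         \<le> (cond_num P * (1 + \<delta>R)) / (1 - \<delta>R * cond_num P)
           * ((frob_norm Cp)\<^sup>2 / ((frob_norm ER)\<^sup>2 + (frob_norm Cr)\<^sup>2))"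
  proof -
  have sym: "transpose P = P" using assms(12) by (simp add: sym_pos_def_def)
  define lM where "lM = lambda_max P"
  define lm where "lm = lambda_min P"
  have lm0: "lm > 0" using spd_lmin_pos[OF assms(12)] by (simp add: lm_def)
  have ubP: "x \<bullet> (P *v x) \<le> lM * (norm x)\<^sup>2" for x using lmax_props[OF sym] by (simp add: lM_def)
  have lbP: "lm * (norm x)\<^sup>2 \<le> x \<bullet> (P *v x)" for x using lmin_props[OF sym] by (simp add: lm_def)
  have snP: "spec_norm P \<le> lM" using spd_spec_norm[OF assms(12)] by (simp add: lM_def)
  have kap: "cond_num P = lM / lm" by (simp add: cond_num_def lM_def lm_def)
  define s where "s = spec_norm \<Delta>PR"
  have s_le: "s \<le> \<delta>R * lM" using assms(17) snP assms(15) unfolding s_def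
    by (meson mult_left_mono order_trans)
  have dl: "\<bar>x \<bullet> (\<Delta>PR *v x)\<bar> \<le> s * (norm x)\<^sup>2" for x
  proof -
    have "\<bar>x \<bullet> (\<Delta>PR *v x)\<bar> \<le> norm x * norm (\<Delta>PR *v x)" by (rule Cauchy_Schwarz_ineq2)
    also have "norm (\<Delta>PR *v x) \<le> s * norm x"
      unfolding s_def spec_norm_def by (rule onorm[OF matrix_vector_mul_bounded_linear])
    then have "norm x * norm (\<Delta>PR *v x) \<le> norm x * (s * norm x)" by (simp add: mult_left_mono)
    finally show ?thesis by (simp add: power2_eq_square mult_ac)
  qed
  define hi where "hi = lM + \<delta>R * lM"
  define lo where "lo = lm - \<delta>R * lM"
  have PRx: "x \<bullet> (PR *v x) = x \<bullet> (P *v x) + x \<bullet> (\<Delta>PR *v x)" for x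
    by (simp add: \<Delta>PR_def matrix_vector_mult_diff_rdistrib inner_diff_right)
  have ub: "x \<bullet> (PR *v x) \<le> hi * (norm x)\<^sup>2" for x
  proof -
    have "s * (norm x)\<^sup>2 \<le> \<delta>R * lM * (norm x)\<^sup>2" by (rule mult_right_mono[OF s_le zero_le_power2])
    then have "x \<bullet> (\<Delta>PR *v x) \<le> \<delta>R * lM * (norm x)\<^sup>2"
      using dl[of x] by linarith
    then show ?thesis using ubP[of x] unfolding PRx hi_def by (simp add: algebra_simps)
  qed
  have lb: "lo * (norm x)\<^sup>2 \<le> x \<bullet> (PR *v x)" for x
  proof -
    have "s * (norm x)\<^sup>2 \<le> \<delta>R * lM * (norm x)\<^sup>2" by (rule mult_right_mono[OF s_le zero_le_power2])
    then have "- (\<delta>R * lM * (norm x)\<^sup>2) \<le> x \<bullet> (\<Delta>PR *v x)"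
      using dl[of x] by linarith
    then show ?thesis using lbP[of x] unfolding PRx lo_def by (simp add: algebra_simps)
  qed
  have trb: "lo * (frob_norm C)\<^sup>2 \<le> trace (C ** PR ** transpose C) \<and>
             trace (C ** PR ** transpose C) \<le> hi * (frob_norm C)\<^sup>2" for C :: "real^('x+'x)^'q"
    unfolding trace_rows frob_rows sum_distrib_left
    using lb ub by (intro conjI sum_mono) auto
  have lM0: "lM \<ge> lm"
  proof -
    obtain v where v: "v \<noteq> (0::real^('x+'x))" "P *v v = lambda_min P *\<^sub>R v" using lmin_props[OF sym] by blast
    have "lm * (norm v)\<^sup>2 \<le> lM * (norm v)\<^sup>2" using ubP[of v] lbP[of v] by linarith
    then show ?thesis using mult_right_le_imp_le v(1) by simp
  qed
  have lo0: "lo > 0"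
  proof -
    have "\<delta>R * (lM / lm) < 1" using assms(18) kap by simp
    then have "\<delta>R * lM < lm" using lm0 by (simp add: field_simps)
    then show ?thesis by (simp add: lo_def)
  qed
  have hi0: "hi \<ge> 0" using lM0 lm0 assms(15) by (simp add: hi_def)
  have fr: "(frob_norm CrR)\<^sup>2 = (frob_norm ER)\<^sup>2 + (frob_norm Cr)\<^sup>2"
    unfolding CrR_def Cr_def ER_def frob_brow neg_prod frob_neg frob_zero by simp
  have coef: "(cond_num P * (1 + \<delta>R)) / (1 - \<delta>R * cond_num P) = hi / lo"
  proof -
    have a: "lM / lm * (1 + \<delta>R) = hi / lm" using lm0 by (simp add: hi_def field_simps)
    have b: "1 - \<delta>R * (lM / lm) = lo / lm" using lm0 by (simp add: lo_def field_simps)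
    show ?thesis unfolding kap a b using lm0 by simp
  qed
  define N where "N = trace (Cp ** PR ** transpose Cp)"
  define D where "D = trace (CrR ** PR ** transpose CrR)"
  define Fp where "Fp = (frob_norm Cp)\<^sup>2"
  define Fr where "Fr = (frob_norm CrR)\<^sup>2"
  have N: "N \<le> hi * Fp" using trb[of Cp] by (simp add: N_def Fp_def)
  have D1: "lo * Fr \<le> D" and D2: "D \<le> hi * Fr" using trb[of CrR] by (simp_all add: D_def Fr_def)
  have Fp0: "Fp \<ge> 0" by (simp add: Fp_def)
  have "N / D \<le> hi / lo * (Fp / Fr)"
  proof (cases "Fr = 0")
    case True
    then have "D = 0" using D1 D2 by simp
    then show ?thesis using True by simp
  next
    case False
    then have Fr0: "Fr > 0" by (simp add: Fr_def)
    then have "lo * Fr > 0" using lo0 by simp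
    then have Dp: "D > 0" using D1 by linarith
    have "N / D \<le> hi * Fp / D" using N Dp by (simp add: divide_right_mono)
    also have "\<dots> \<le> hi * Fp / (lo * Fr)"
      using Dp D1 lo0 Fr0 hi0 Fp0 by (intro divide_left_mono) auto
    also have "\<dots> = hi / lo * (Fp / Fr)" by simp
    finally show ?thesis .
  qed
  then show ?thesis unfolding coef N_def D_def Fp_def Fr_def fr .
qed

end
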